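(* Every finite word that occurs as a factor of $\mathbf{t}_{3/2}$ occurs in $\mathbf{t}_{3/2}$ both at some even position and at some odd position.
   Context: The Thue--Morse word in base $3/2$ is the unique binary sequence $\mathbf{t}_{3/2}=(t_n)_{n\ge0}$ with $t_0=0$, $t_{3n}=t_{3n+1}=t_{2n}$ and $t_{3n+2}=1-t_{2n+1}$ for all $n\ge0$ (equivalently, $t_n$ is the digit sum modulo $2$ of the base-$3/2$ expansion of $n$, where $\langle 0\rangle$ is empty and $\langle n\rangle=\langle m\rangle d$ for $2n=3m+d$, $d\in\{0,1,2\}$). A word $u$ occurs at position $i$ if $t_it_{i+1}\cdots t_{i+|u|-1}=u$. *)

theory Defs
  imports Main
begin

text \<open>Thue--Morse word in base 3/2: t 0 = 0, t (3n) = t (3n+1) = t (2n),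
  t (3n+2) = 1 - t (2n+1).  Values in {0,1} as naturals.\<close>

function tm32 :: "nat \<Rightarrow> nat" where
  "tm32 n = (if n = 0 then 0
             else if n mod 3 = 2 then 1 - tm32 (2 * (n div 3) + 1)
             else tm32 (2 * (n div 3)))"
  by auto
termination
  by (relation "measure id") (auto, presburger+)

declare tm32.simps [simp del]

definition occurs_at :: "nat list \<Rightarrow> nat \<Rightarrow> bool" where
  "occurs_at u i \<longleftrightarrow> (\<forall>j < length u. tm32 (i + j) = u ! j)"

end

theory Submission
  imports Defs
begin

definition PP :: "nat \<Rightarrow> nat" where "PP n = 2 * n div 3"

lemma tm32_0: "tm32 0 = 0"
  by (simp add: tm32.simps)

lemma tm32_rec: "tm32 n = (if odd (PP n) then 1 - tm32 (PP n) else tm32 (PP n))"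
proof (cases "n = 0")
  case True then show ?thesis by (simp add: PP_def tm32_0)
next
  case False
  have "n mod 3 = 0 \<or> n mod 3 = 1 \<or> n mod 3 = 2" by arith
  moreover have "n mod 3 = 0 \<Longrightarrow> PP n = 2 * (n div 3)" unfolding PP_def by presburger
  moreover have "n mod 3 = 1 \<Longrightarrow> PP n = 2 * (n div 3)" unfolding PP_def by presburger
  moreover have "n mod 3 = 2 \<Longrightarrow> PP n = 2 * (n div 3) + 1" unfolding PP_def by presburger
  ultimately show ?thesis using False
    by (subst tm32.simps) auto
qed

lemma tm32_bin: "tm32 n \<le> 1"
proof (induction n rule: less_induct)
  case (less n)
  show ?case
  proof (cases "n = 0")
    case True then show ?thesis by (simp add: tm32_0)
  next
    case False
    then have lt: "2 * (n div 3) < n" by arith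
    show ?thesis using less.IH[OF lt] by (subst tm32.simps) auto
  qed
qed

lemma PP_shift: "PP (n + 3^(Suc K) * j) = PP n + 3^K * (2 * j)"
  unfolding PP_def by simp

lemma key: "(tm32 (n + 3^K * j) = tm32 n) \<longleftrightarrow>
   (tm32 ((PP^^K) n + 2^K * j) = tm32 ((PP^^K) n))"
proof (induction K arbitrary: n j)
  case 0 then show ?case by simp
next
  case (Suc K)
  have par: "odd (PP n + 3^K * (2 * j)) = odd (PP n)" by simp
  have a: "tm32 (n + 3^(Suc K) * j) = (if odd (PP n) then 1 - tm32 (PP n + 3^K * (2 * j))
        else tm32 (PP n + 3^K * (2 * j)))"
    by (subst tm32_rec) (simp only: PP_shift par)
  have b: "tm32 n = (if odd (PP n) then 1 - tm32 (PP n) else tm32 (PP n))"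
    by (rule tm32_rec)
  have c: "(tm32 (n + 3^(Suc K) * j) = tm32 n) \<longleftrightarrow> (tm32 (PP n + 3^K * (2 * j)) = tm32 (PP n))"
    using a b tm32_bin[of "PP n"] tm32_bin[of "PP n + 3^K * (2 * j)"] by auto
  have d: "(PP^^K) (PP n) = (PP^^Suc K) n" by (simp add: funpow_Suc_right del: funpow.simps)
  have e: "2^K * (2 * j) = 2^Suc K * (j::nat)" by simp
  show ?case using c Suc.IH[of "PP n" "2 * j"] d e by simp
qed

lemma PP_le: "PP m \<le> m - 1"
  unfolding PP_def by arith

lemma PPk: "(PP^^k) n \<le> n - k"
proof (induction k)
  case 0 then show ?case by simp
next
  case (Suc k)
  have "(PP^^Suc k) n = PP ((PP^^k) n)" by simp
  also have "\<dots> \<le> (PP^^k) n - 1" by (rule PP_le)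
  finally show ?case using Suc by arith
qed

lemma shift: assumes "n < K"
  shows "(tm32 (n + 3^K * j) = tm32 n) \<longleftrightarrow> (tm32 (2^K * j) = 0)"
proof -
  have "(PP^^K) n = 0" using PPk[of K n] assms by simp
  then show ?thesis using key[of n K j] by (simp add: tm32_0)
qed

lemma other_parity:
  assumes occ: "occurs_at u p"
  shows "\<exists>i. odd (i + p) \<and> occurs_at u i"
proof -
  define L where "L = length u"
  define K1 where "K1 = p + L"
  show ?thesis
  proof (cases "tm32 (2^K1 * 1) = 0")
    case True
    have "occurs_at u (p + 3^K1 * 1)"
      unfolding occurs_at_def
    proof (intro allI impI)
      fix i assume "i < length u"
      then have "p + i < K1" using K1_def L_def by simp
      then have "tm32 (p + i + 3^K1 * 1) = tm32 (p + i)" using shift True by blast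
      moreover have "p + 3^K1 * 1 + i = p + i + 3^K1 * 1" by simp
      moreover have "tm32 (p + i) = u ! i" using occ \<open>i < length u\<close> by (simp add: occurs_at_def)
      ultimately show "tm32 (p + 3^K1 * 1 + i) = u ! i" by metis
    qed
    moreover have "odd (p + 3^K1 * 1 + p)" by simp
    ultimately show ?thesis by blast
  next
    case F1: False
    define q where "q = p + 3^K1 * 1"
    define K2 where "K2 = q + L"
    show ?thesis
    proof (cases "tm32 (2^(Suc K2) * 1) = 0")
      case True
      have "occurs_at u (p + 3^(Suc K2) * 1)"
        unfolding occurs_at_def
      proof (intro allI impI)
        fix i assume "i < length u"
        then have "p + i < Suc K2" using K2_def L_def q_def by simp
        then have "tm32 (p + i + 3^(Suc K2) * 1) = tm32 (p + i)" using shift True by blast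
        moreover have "p + 3^(Suc K2) * 1 + i = p + i + 3^(Suc K2) * 1" by simp
        moreover have "tm32 (p + i) = u ! i" using occ \<open>i < length u\<close> by (simp add: occurs_at_def)
        ultimately show "tm32 (p + 3^(Suc K2) * 1 + i) = u ! i" by metis
      qed
      moreover have "odd (p + 3^(Suc K2) * 1 + p)" by simp
      ultimately show ?thesis by blast
    next
      case F2: False
      have F2': "tm32 (2^K2 * 2) \<noteq> 0" using F2 by (simp add: mult.commute)
      have "occurs_at u (q + 3^K2 * 2)"
        unfolding occurs_at_def
      proof (intro allI impI)
        fix i assume "i < length u"
        then have h1: "p + i < K1" using K1_def L_def by simp
        have h2: "q + i < K2" using K2_def L_def \<open>i < length u\<close> by simp
        have x: "tm32 (p + i + 3^K1 * 1) \<noteq> tm32 (p + i)" using shift[OF h1, of 1] F1 by simp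
        have y: "tm32 (q + i + 3^K2 * 2) \<noteq> tm32 (q + i)" using shift[OF h2, of 2] F2' by simp
        have qi: "q + i = p + i + 3^K1 * 1" using q_def by simp
        have "tm32 (q + i + 3^K2 * 2) = tm32 (p + i)"
          using x[folded qi] y tm32_bin[of "p + i"] tm32_bin[of "q + i"] tm32_bin[of "q + i + 3^K2 * 2"]
          by linarith
        moreover have "q + 3^K2 * 2 + i = q + i + 3^K2 * 2" by simp
        moreover have "tm32 (p + i) = u ! i" using occ \<open>i < length u\<close> by (simp add: occurs_at_def)
        ultimately show "tm32 (q + 3^K2 * 2 + i) = u ! i" by metis
      qed
      moreover have "odd (q + 3^K2 * 2 + p)" using q_def by simp
      ultimately show ?thesis by blast
    qed
  qed
qed

theorem proposition14:
  fixes u :: "nat list"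
  assumes "\<exists>i. occurs_at u i"
  shows "(\<exists>i. even i \<and> occurs_at u i) \<and> (\<exists>i. odd i \<and> occurs_at u i)"
proof -
  obtain p where p: "occurs_at u p" using assms by blast
  obtain i where i: "odd (i + p)" "occurs_at u i" using other_parity[OF p] by blast
  show ?thesis
  proof (cases "even p")
    case True
    then have "odd i" using i by simp
    then show ?thesis using True p i by blast
  next
    case False
    then have "even i" using i by simp
    then show ?thesis using False p i by blast
  qed
qed

end
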